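(* Under the hypotheses of Theorem 2 (Assumptions A, B, C, D; Algorithm 2; $T=\beta/\varepsilon$; $\eta^{(t)}=D\sqrt\varepsilon$; $\alpha_i^{(t)}=(1+\varepsilon)^t\frac{\alpha}{e^\beta L_\phi}$ with $\alpha\in(0,\tfrac14)$), $$\frac1T\sum_{t=0}^{T-1}\frac1n\sum_{i=1}^n\big[f(w^{(t)};i)-\phi_i(h_i^* )\big]\le\frac{e^{\beta}L_\phi(1+\varepsilon)}{2(1-4\alpha)\alpha\beta}\cdot\frac1n\sum_{i=1}^n\|h(w^{(0)};i)-h_i^*\|^2\cdot\varepsilon+\frac{e^{\beta}L_\phi(4\varepsilon+3)}{2\alpha(1-4\alpha)}\Big[D^2H^2+c\big(2+(V+\varepsilon^2+2)GD^2\big)^2+2+V\Big]\varepsilon.$$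
   Context: Let $n,c,d$ be positive integers and $[n]=\{1,\dots,n\}$. For each $i\in[n]$ let $h(\cdot;i):\mathbb{R}^d\to\mathbb{R}^c$ (components $h_j(\cdot;i)$) and $\phi_i:\mathbb{R}^c\to\mathbb{R}$; $f(w;i)=\phi_i(h(w;i))$. Each $\phi_i$ attains its minimum at $h_i^*$. Norms: Euclidean for vectors, operator for matrices. Assumption A: each $\phi_i$ is convex, bounded below, and $L_\phi$-smooth. Assumption B: each $h(\cdot;i)$ is twice continuously differentiable and there is $G>0$ with $\|\nabla_w^2 h_j(w;i)\|\le G$ for all $w,i,j$. Iteration setup: given $\varepsilon>0$, $\eta^{(t)}>0$, $\alpha_i^{(t)}>0$ and iterates $w^{(t)}$, let $H_i^{(t)}$ be the Jacobian of $h(\cdot;i)$ at $w^{(t)}$, $\Phi^{(t)}(v)=\frac{1}{2n}\sum_{i=1}^n\|\eta^{(t)}H_i^{(t)}v-\alpha_i^{(t)}\nabla\phi_i(h(w^{(t)};i))\|^2$, $\Psi^{(t)}(v)=\Phi^{(t)}(v)+\frac{\varepsilon^2}{2}\|v\|^2$, $v_{*\mathrm{reg}}^{(t)}$ its unique minimizer. Algorithm 2: $w^{(0)}$ arbitrary, $w^{(t+1)}=w^{(t)}-\eta^{(t)}v^{(t)}$ where $\|v^{(t)}-v_{*\mathrm{reg}}^{(t)}\|\le\varepsilon$, $t=0,\dots,T-1$, with $T=\beta/\varepsilon$ an integer, $\beta>0$. Assumption C (constant $V>0$): for each $0\le t<T$ there is $\hat v^{(t)}$ with $\|\hat v^{(t)}\|^2\le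 V$ and $\Phi^{(t)}(\hat v^{(t)})\le\varepsilon^2$. Assumption D (constant $H>0$): $\|H_i^{(t)}\|\le H/\sqrt\varepsilon$ for all $i\in[n]$, $0\le t<T$. *)

theory Defs
  imports "HOL-Analysis.Analysis"
begin

text \<open>Phi^(t)(v) = 1/(2n) sum_{i=1..n} norm(eta * H_i v - a_i * g_i)^2, where H_i is the
Jacobian (a c x d matrix) of h(.;i) at w^(t) and g_i the gradient of phi_i at h(w^(t);i).\<close>
definition Phi_obj :: "nat \<Rightarrow> real \<Rightarrow> (nat \<Rightarrow> real) \<Rightarrow> (nat \<Rightarrow> real^'d^'c) \<Rightarrow> (nat \<Rightarrow> real^'c)
    \<Rightarrow> real^'d \<Rightarrow> real" where
  "Phi_obj n eta a Hm g v =
     (1 / (2 * real n)) * (\<Sum>i=1..n. (norm (eta *\<^sub>R (Hm i *v v) - a i *\<^sub>R g i))\<^sup>2)"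

definition Psi_obj :: "nat \<Rightarrow> real \<Rightarrow> (nat \<Rightarrow> real) \<Rightarrow> (nat \<Rightarrow> real^'d^'c) \<Rightarrow> (nat \<Rightarrow> real^'c)
    \<Rightarrow> real \<Rightarrow> real^'d \<Rightarrow> real" where
  "Psi_obj n eta a Hm g eps v = Phi_obj n eta a Hm g v + eps\<^sup>2 / 2 * (norm v)\<^sup>2"

end

theory Submission
  imports Defs
begin



lemma lin_upper:
  fixes f f' :: "real \<Rightarrow> real"
  assumes t: "0 \<le> t"
    and d: "\<And>s. 0 \<le> s \<Longrightarrow> s \<le> t \<Longrightarrow> (f has_real_derivative f' s) (at s)"
    and b: "\<And>s. 0 \<le> s \<Longrightarrow> s \<le> t \<Longrightarrow> f' s \<le> K"
  shows "f t - f 0 \<le> K * t"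
proof -
  have "(\<lambda>s. f s - K * s) t \<le> (\<lambda>s. f s - K * s) 0"
  proof (rule DERIV_nonpos_imp_nonincreasing[OF t])
    fix s assume "0 \<le> s" "s \<le> t"
    then show "\<exists>y. ((\<lambda>s. f s - K * s) has_real_derivative y) (at s) \<and> y \<le> 0"
      using d b by (intro exI[of _ "f' s - K"]) (auto intro!: derivative_eq_intros)
  qed
  then show ?thesis by simp
qed

lemma quad_upper:
  fixes f f' :: "real \<Rightarrow> real"
  assumes d: "\<And>s. 0 \<le> s \<Longrightarrow> s \<le> 1 \<Longrightarrow> (f has_real_derivative f' s) (at s)"
    and b: "\<And>s. 0 \<le> s \<Longrightarrow> s \<le> 1 \<Longrightarrow> f' s - f' 0 \<le> K * s"
  shows "f 1 - f 0 - f' 0 \<le> K / 2"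
proof -
  have "(\<lambda>s. f s - s * f' 0 - K / 2 * s\<^sup>2) 1 \<le> (\<lambda>s. f s - s * f' 0 - K / 2 * s\<^sup>2) 0"
  proof (rule DERIV_nonpos_imp_nonincreasing[of 0 1])
    fix s :: real assume s: "0 \<le> s" "s \<le> 1"
    show "\<exists>y. ((\<lambda>s. f s - s * f' 0 - K / 2 * s\<^sup>2) has_real_derivative y) (at s) \<and> y \<le> 0"
      using d[OF s] b[OF s]
      by (intro exI[of _ "f' s - f' 0 - K * s"]) (auto intro!: derivative_eq_intros simp: power2_eq_square)
  qed simp
  then show ?thesis by simp
qed

lemma taylor2_abs:
  fixes f f' f'' :: "real \<Rightarrow> real"
  assumes d: "\<And>s. (f has_real_derivative f' s) (at s)"
    and d2: "\<And>s. (f' has_real_derivative f'' s) (at s)"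
    and b: "\<And>s. \<bar>f'' s\<bar> \<le> K"
  shows "\<bar>f 1 - f 0 - f' 0\<bar> \<le> K / 2"
proof -
  have up: "f' s - f' 0 \<le> K * s" if "0 \<le> s" for s
    using lin_upper[of s f' f'' K] d2 b that by (auto simp: abs_le_iff)
  have lo: "(- f' s) - (- f' 0) \<le> K * s" if "0 \<le> s" for s
    using lin_upper[of s "\<lambda>x. - f' x" "\<lambda>x. - f'' x" K] d2 b that
    by (auto simp: abs_le_iff intro!: derivative_eq_intros)
  have 1: "f 1 - f 0 - f' 0 \<le> K / 2"
    using quad_upper[of f f' K] d up by auto
  have 2: "(- f 1) - (- f 0) - (- f' 0) \<le> K / 2"
    using quad_upper[of "\<lambda>x. - f x" "\<lambda>x. - f' x" K] d lo
    by (auto intro!: derivative_eq_intros)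
  show ?thesis using 1 2 by linarith
qed

lemma line_deriv:
  fixes F :: "'a::real_normed_vector \<Rightarrow> real"
  assumes "(F has_derivative Lf) (at (x + s *\<^sub>R d))" and "bounded_linear Lf"
  shows "((\<lambda>s. F (x + s *\<^sub>R d)) has_real_derivative (Lf d)) (at s)"
proof -
  have "((\<lambda>s. x + s *\<^sub>R d) has_derivative (\<lambda>s. s *\<^sub>R d)) (at s)"
    by (auto intro!: derivative_eq_intros)
  from has_derivative_compose[OF this assms(1)]
  have "((\<lambda>s. F (x + s *\<^sub>R d)) has_derivative (\<lambda>t. Lf (t *\<^sub>R d))) (at s)" .
  moreover have "(\<lambda>t. Lf (t *\<^sub>R d)) = (*) (Lf d)"
    using assms(2) by (simp add: fun_eq_iff linear_simps bounded_linear.linear)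
  ultimately show ?thesis by (simp add: has_field_derivative_def)
qed



lemma norm_sq_vec: "(norm (x::real^'n))\<^sup>2 = (\<Sum>j\<in>UNIV. (x $ j)\<^sup>2)"
  by (simp add: norm_vec_def L2_set_def sum_nonneg)

lemma taylor_vec:
  fixes h :: "real^'d \<Rightarrow> real^'c" and J :: "real^'d \<Rightarrow> real^'d^'c"
    and Hs :: "'c \<Rightarrow> real^'d \<Rightarrow> real^'d^'d"
  assumes jac: "\<And>w. (h has_derivative (\<lambda>u. J w *v u)) (at w)"
    and hess: "\<And>j w. ((\<lambda>x. J x $ j) has_derivative (\<lambda>u. Hs j w *v u)) (at w)"
    and bnd: "\<And>j w. onorm (\<lambda>u. Hs j w *v u) \<le> G"
  shows "(norm (h (w + s) - h w - J w *v s))\<^sup>2 \<le> real CARD('c) * (G / 2 * (norm s)\<^sup>2)\<^sup>2"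
proof -
  have comp: "\<bar>(h (w + s) - h w - J w *v s) $ j\<bar> \<le> G / 2 * (norm s)\<^sup>2" for j
  proof -
    let ?f = "\<lambda>t. h (w + t *\<^sub>R s) $ j"
    let ?f' = "\<lambda>t. J (w + t *\<^sub>R s) $ j \<bullet> s"
    let ?f'' = "\<lambda>t. (Hs j (w + t *\<^sub>R s) *v s) \<bullet> s"
    have d1: "(?f has_real_derivative ?f' t) (at t)" for t
    proof -
      have "((\<lambda>x. h x $ j) has_derivative (\<lambda>u. (J (w + t *\<^sub>R s) *v u) $ j)) (at (w + t *\<^sub>R s))"
        by (rule bounded_linear.has_derivative[OF bounded_linear_vec_nth jac])
      from line_deriv[OF this] show ?thesis
        by (simp add: matrix_vector_mul_component bounded_linear_inner_right)
    qed
    have d2: "(?f' has_real_derivative ?f'' t) (at t)" for t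
    proof -
      have "((\<lambda>x. J x $ j \<bullet> s) has_derivative (\<lambda>u. (Hs j (w + t *\<^sub>R s) *v u) \<bullet> s)) (at (w + t *\<^sub>R s))"
        using hess by (auto intro!: derivative_eq_intros)
      from line_deriv[OF this] show ?thesis
        by (simp add: bounded_linear_inner_left bounded_linear_compose[OF bounded_linear_inner_left])
    qed
    have b: "\<bar>?f'' t\<bar> \<le> G * (norm s)\<^sup>2" for t
    proof -
      have "\<bar>?f'' t\<bar> \<le> norm (Hs j (w + t *\<^sub>R s) *v s) * norm s"
        by (rule Cauchy_Schwarz_ineq2)
      also have "\<dots> \<le> (onorm (\<lambda>u. Hs j (w + t *\<^sub>R s) *v u) * norm s) * norm s"
        by (intro mult_right_mono onorm) auto
      also have "\<dots> \<le> (G * norm s) * norm s"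
        by (intro mult_right_mono bnd) auto
      finally show ?thesis by (simp add: power2_eq_square mult.assoc)
    qed
    have "\<bar>?f 1 - ?f 0 - ?f' 0\<bar> \<le> G * (norm s)\<^sup>2 / 2"
      by (rule taylor2_abs[OF d1 d2 b])
    then show ?thesis by (simp add: matrix_vector_mul_component)
  qed
  have "(norm (h (w + s) - h w - J w *v s))\<^sup>2 = (\<Sum>j\<in>UNIV. ((h (w + s) - h w - J w *v s) $ j)\<^sup>2)"
    by (rule norm_sq_vec)
  also have "\<dots> \<le> (\<Sum>j\<in>(UNIV::'c set). (G / 2 * (norm s)\<^sup>2)\<^sup>2)"
    by (intro sum_mono) (metis comp abs_le_square_iff abs_of_nonneg abs_ge_zero order_trans power2_abs)
  also have "\<dots> = real CARD('c) * (G / 2 * (norm s)\<^sup>2)\<^sup>2" by simp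
  finally show ?thesis .
qed



lemma tangent_ineq:
  fixes F :: "'a::real_inner \<Rightarrow> real"
  assumes cv: "convex_on UNIV F" and gd: "\<And>x. GDERIV F x :> g x"
  shows "F x + g x \<bullet> (y - x) \<le> F y"
proof -
  let ?k = "\<lambda>t. F (x + t *\<^sub>R (y - x))"
  have ck: "convex_on UNIV ?k"
  proof (rule convex_onI)
    fix t a b :: real assume "0 < t" "t < 1"
    have "x + ((1 - t) * a + t * b) *\<^sub>R (y - x) = (1 - t) *\<^sub>R (x + a *\<^sub>R (y - x)) + t *\<^sub>R (x + b *\<^sub>R (y - x))"
      by (simp add: algebra_simps)
    moreover have "F ((1 - t) *\<^sub>R (x + a *\<^sub>R (y - x)) + t *\<^sub>R (x + b *\<^sub>R (y - x)))
        \<le> (1 - t) * F (x + a *\<^sub>R (y - x)) + t * F (x + b *\<^sub>R (y - x))"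
      using convex_onD[OF cv] \<open>0 < t\<close> \<open>t < 1\<close> by simp
    ultimately show "?k ((1 - t) *\<^sub>R a + t *\<^sub>R b) \<le> (1 - t) * ?k a + t * ?k b" by simp
  qed simp
  have "(F has_derivative (\<lambda>h. h \<bullet> g x)) (at (x + 0 *\<^sub>R (y - x)))"
    using gd[of x] by (simp add: gderiv_def)
  from line_deriv[OF this bounded_linear_inner_left]
  have "(?k has_real_derivative (y - x) \<bullet> g x) (at 0)" .
  from convex_on_imp_above_tangent[OF ck _ _ _ , of 0 1 "(y - x) \<bullet> g x"] this
  have "?k 1 - ?k 0 \<ge> (y - x) \<bullet> g x * (1 - 0)" by simp
  then show ?thesis by (simp add: inner_commute)
qed

lemma smooth_upper:
  fixes F :: "'a::real_inner \<Rightarrow> real"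
  assumes gd: "\<And>x. GDERIV F x :> g x" and lip: "\<And>x y. norm (g x - g y) \<le> L * norm (x - y)"
  shows "F y \<le> F x + g x \<bullet> (y - x) + L / 2 * (norm (y - x))\<^sup>2"
proof -
  let ?d = "y - x"
  let ?f = "\<lambda>t. F (x + t *\<^sub>R ?d)"
  let ?f' = "\<lambda>t. ?d \<bullet> g (x + t *\<^sub>R ?d)"
  have d: "(?f has_real_derivative ?f' t) (at t)" for t
  proof -
    have "(F has_derivative (\<lambda>h. h \<bullet> g (x + t *\<^sub>R ?d))) (at (x + t *\<^sub>R ?d))"
      using gd by (simp add: gderiv_def)
    from line_deriv[OF this bounded_linear_inner_left] show ?thesis .
  qed
  have b: "?f' t - ?f' 0 \<le> (L * (norm ?d)\<^sup>2) * t" if "0 \<le> t" for t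
  proof -
    have "?f' t - ?f' 0 = ?d \<bullet> (g (x + t *\<^sub>R ?d) - g x)" by (simp add: inner_diff_right)
    also have "\<dots> \<le> norm ?d * norm (g (x + t *\<^sub>R ?d) - g x)" by (rule norm_cauchy_schwarz)
    also have "\<dots> \<le> norm ?d * (L * norm (t *\<^sub>R ?d))"
      using lip[of "x + t *\<^sub>R ?d" x] by (intro mult_left_mono) auto
    also have "\<dots> = (L * (norm ?d)\<^sup>2) * t" using that by (simp add: power2_eq_square)
    finally show ?thesis .
  qed
  have "?f 1 - ?f 0 - ?f' 0 \<le> L * (norm ?d)\<^sup>2 / 2"
    by (rule quad_upper[OF d b]) auto
  then show ?thesis by (simp add: inner_commute)
qed

lemma nn_inner: "norm v * norm v = v \<bullet> v"
  by (metis power2_norm_eq_inner power2_eq_square)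

lemma grad_sq_bound:
  fixes F :: "'a::real_inner \<Rightarrow> real"
  assumes gd: "\<And>x. GDERIV F x :> g x" and lip: "\<And>x y. norm (g x - g y) \<le> L * norm (x - y)"
    and L: "L > 0" and mn: "\<And>x. F hs \<le> F x"
  shows "(norm (g x))\<^sup>2 \<le> 2 * L * (F x - F hs)"
proof -
  let ?y = "x - (1 / L) *\<^sub>R g x"
  have "F ?y \<le> F x + g x \<bullet> (?y - x) + L / 2 * (norm (?y - x))\<^sup>2"
    by (rule smooth_upper[OF gd lip])
  also have "\<dots> = F x - (g x \<bullet> g x) / (2 * L)"
    using L by (simp add: power2_norm_eq_inner inner_diff_right field_simps power2_eq_square nn_inner)
  also have "g x \<bullet> g x = (norm (g x))\<^sup>2" by (simp add: power2_norm_eq_inner)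
  finally have "F hs \<le> F x - (norm (g x))\<^sup>2 / (2 * L)" using mn[of ?y] by linarith
  then show ?thesis using L by (simp add: field_simps)
qed



lemma young_sq:
  fixes p e :: "'a::real_inner"
  assumes "\<epsilon> > 0"
  shows "(norm (p + e))\<^sup>2 \<le> (1 + \<epsilon>) * (norm p)\<^sup>2 + (1 + 1 / \<epsilon>) * (norm e)\<^sup>2"
proof -
  have "(norm (p + e))\<^sup>2 \<le> (norm p + norm e)\<^sup>2"
    by (simp add: norm_triangle_ineq power_mono)
  also have "\<dots> \<le> (1 + \<epsilon>) * (norm p)\<^sup>2 + (1 + 1 / \<epsilon>) * (norm e)\<^sup>2"
  proof -
    have "0 \<le> (\<epsilon> * norm p - norm e)\<^sup>2 / \<epsilon>" using assms by simp
    then show ?thesis using assms by (simp add: field_simps power2_eq_square)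
  qed
  finally show ?thesis .
qed

lemma one_step:
  fixes x g e :: "'a::real_inner"
  assumes eps: "\<epsilon> > 0" and a: "a \<ge> 0" and gx: "D0 \<le> g \<bullet> x" and D0: "0 \<le> D0"
    and gs: "(norm g)\<^sup>2 \<le> 2 * L * D0" and aL: "a * L \<le> \<alpha>"
  shows "(norm (x - a *\<^sub>R g + e))\<^sup>2 \<le> (1 + \<epsilon>) * ((norm x)\<^sup>2 - 2 * a * (1 - \<alpha>) * D0) + (1 + 1 / \<epsilon>) * (norm e)\<^sup>2"
proof -
  have "(norm (x - a *\<^sub>R g))\<^sup>2 = (norm x)\<^sup>2 - 2 * a * (g \<bullet> x) + a\<^sup>2 * (norm g)\<^sup>2"
    unfolding power2_norm_eq_inner by (simp add: inner_diff_left inner_diff_right inner_commute power2_eq_square algebra_simps)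
  also have "\<dots> \<le> (norm x)\<^sup>2 - 2 * a * D0 + a * (2 * (a * L) * D0)"
  proof -
    have "2 * a * D0 \<le> 2 * a * (g \<bullet> x)" using a gx by (simp add: mult_left_mono)
    moreover have "a\<^sup>2 * (norm g)\<^sup>2 \<le> a\<^sup>2 * (2 * L * D0)" using gs by (simp add: mult_left_mono)
    ultimately show ?thesis by (simp add: power2_eq_square algebra_simps)
  qed
  also have "\<dots> \<le> (norm x)\<^sup>2 - 2 * a * D0 + a * (2 * \<alpha> * D0)"
    using a D0 aL by (intro add_left_mono mult_left_mono mult_right_mono) auto
  also have "\<dots> = (norm x)\<^sup>2 - 2 * a * (1 - \<alpha>) * D0" by (simp add: algebra_simps)
  finally have 1: "(norm (x - a *\<^sub>R g))\<^sup>2 \<le> (norm x)\<^sup>2 - 2 * a * (1 - \<alpha>) * D0" .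
  have "(norm (x - a *\<^sub>R g + e))\<^sup>2 \<le> (1 + \<epsilon>) * (norm (x - a *\<^sub>R g))\<^sup>2 + (1 + 1 / \<epsilon>) * (norm e)\<^sup>2"
    by (rule young_sq[OF eps])
  also have "\<dots> \<le> (1 + \<epsilon>) * ((norm x)\<^sup>2 - 2 * a * (1 - \<alpha>) * D0) + (1 + 1 / \<epsilon>) * (norm e)\<^sup>2"
    using 1 eps by (intro add_right_mono mult_left_mono) auto
  finally show ?thesis .
qed

lemma three_sq_real:
  fixes A B C :: real
  shows "(A + B + C)\<^sup>2 \<le> 3 * (A\<^sup>2 + B\<^sup>2 + C\<^sup>2)"
proof -
  have "(A + B + C)\<^sup>2 = 3 * (A\<^sup>2 + B\<^sup>2 + C\<^sup>2) - ((A - B)\<^sup>2 + (B - C)\<^sup>2 + (A - C)\<^sup>2)"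
    by (simp add: power2_eq_square algebra_simps)
  moreover have "0 \<le> (A - B)\<^sup>2 + (B - C)\<^sup>2 + (A - C)\<^sup>2" by simp
  ultimately show ?thesis by linarith
qed

lemma three_sq:
  fixes p q r :: "'a::real_normed_vector"
  shows "(norm (p + q + r))\<^sup>2 \<le> 3 * ((norm p)\<^sup>2 + (norm q)\<^sup>2 + (norm r)\<^sup>2)"
proof -
  have "norm (p + q + r) \<le> norm p + norm q + norm r"
    by (metis add_right_mono norm_triangle_ineq order_trans)
  then have "(norm (p + q + r))\<^sup>2 \<le> (norm p + norm q + norm r)\<^sup>2"
    by (simp add: power_mono)
  also have "\<dots> \<le> 3 * ((norm p)\<^sup>2 + (norm q)\<^sup>2 + (norm r)\<^sup>2)"
    by (rule three_sq_real)
  finally show ?thesis .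
qed



theorem mainTheorem17:
  fixes n :: nat
    and h :: "nat \<Rightarrow> real^'d \<Rightarrow> real^'c"
    and Jh :: "nat \<Rightarrow> real^'d \<Rightarrow> real^'d^'c"
    and Hh :: "nat \<Rightarrow> 'c \<Rightarrow> real^'d \<Rightarrow> real^'d^'d"
    and \<phi> :: "nat \<Rightarrow> real^'c \<Rightarrow> real"
    and g\<phi> :: "nat \<Rightarrow> real^'c \<Rightarrow> real^'c"
    and hstar :: "nat \<Rightarrow> real^'c"
    and L\<phi> G V H D \<epsilon> \<beta> \<alpha> :: real
    and T :: nat
    and w :: "nat \<Rightarrow> real^'d"
    and v vreg :: "nat \<Rightarrow> real^'d"
  assumes n_pos: "n \<ge> 1"
    \<comment> \<open>phi_i attains its minimum at h_i^*\<close>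
    and hstar_min: "\<And>i x. i \<in> {1..n} \<Longrightarrow> \<phi> i (hstar i) \<le> \<phi> i x"
    \<comment> \<open>Assumption A\<close>
    and A_convex: "\<And>i. i \<in> {1..n} \<Longrightarrow> convex_on UNIV (\<phi> i)"
    and A_bdd: "\<And>i. i \<in> {1..n} \<Longrightarrow> bdd_below (range (\<phi> i))"
    and A_grad: "\<And>i x. i \<in> {1..n} \<Longrightarrow> GDERIV (\<phi> i) x :> g\<phi> i x"
    and A_Lpos: "L\<phi> > 0"
    and A_smooth: "\<And>i x y. i \<in> {1..n} \<Longrightarrow> norm (g\<phi> i x - g\<phi> i y) \<le> L\<phi> * norm (x - y)"
    \<comment> \<open>Assumption B: h(.;i) is C^2 (Jacobian Jh, Hessians of components Hh), Hessians bounded by G\<close>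
    and B_jac: "\<And>i w. i \<in> {1..n} \<Longrightarrow> (h i has_derivative (\<lambda>u. Jh i w *v u)) (at w)"
    and B_hess: "\<And>i j w. i \<in> {1..n} \<Longrightarrow> ((\<lambda>x. Jh i x $ j) has_derivative (\<lambda>u. Hh i j w *v u)) (at w)"
    and B_cont: "\<And>i j. i \<in> {1..n} \<Longrightarrow> continuous_on UNIV (Hh i j)"
    and B_Gpos: "G > 0"
    and B_bound: "\<And>i j w. i \<in> {1..n} \<Longrightarrow> onorm (\<lambda>u. Hh i j w *v u) \<le> G"
    \<comment> \<open>parameters\<close>
    and eps_pos: "\<epsilon> > 0"
    and beta_pos: "\<beta> > 0"
    and T_def: "real T = \<beta> / \<epsilon>"
    and D_pos: "D > 0"
    and alpha_range: "0 < \<alpha>" "\<alpha> < 1 / 4"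
    \<comment> \<open>Algorithm 2 with eta^(t) = D sqrt eps, alpha_i^(t) = (1+eps)^t alpha/(e^beta L_phi)\<close>
    and vreg_min: "\<And>t u. t < T \<Longrightarrow>
       Psi_obj n (D * sqrt \<epsilon>) (\<lambda>i. (1 + \<epsilon>) ^ t * \<alpha> / (exp \<beta> * L\<phi>))
         (\<lambda>i. Jh i (w t)) (\<lambda>i. g\<phi> i (h i (w t))) \<epsilon> (vreg t)
       \<le> Psi_obj n (D * sqrt \<epsilon>) (\<lambda>i. (1 + \<epsilon>) ^ t * \<alpha> / (exp \<beta> * L\<phi>))
         (\<lambda>i. Jh i (w t)) (\<lambda>i. g\<phi> i (h i (w t))) \<epsilon> u"
    and v_approx: "\<And>t. t < T \<Longrightarrow> norm (v t - vreg t) \<le> \<epsilon>"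
    and w_step: "\<And>t. t < T \<Longrightarrow> w (Suc t) = w t - (D * sqrt \<epsilon>) *\<^sub>R v t"
    \<comment> \<open>Assumption C\<close>
    and C_V: "V > 0"
    and C_assm: "\<And>t. t < T \<Longrightarrow> \<exists>vh. (norm vh)\<^sup>2 \<le> V \<and>
       Phi_obj n (D * sqrt \<epsilon>) (\<lambda>i. (1 + \<epsilon>) ^ t * \<alpha> / (exp \<beta> * L\<phi>))
         (\<lambda>i. Jh i (w t)) (\<lambda>i. g\<phi> i (h i (w t))) vh \<le> \<epsilon>\<^sup>2"
    \<comment> \<open>Assumption D\<close>
    and D_H: "H > 0"
    and D_assm: "\<And>i t. i \<in> {1..n} \<Longrightarrow> t < T \<Longrightarrow> onorm (\<lambda>u. Jh i (w t) *v u) \<le> H / sqrt \<epsilon>"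
  shows "(1 / real T) * (\<Sum>t<T. (1 / real n) * (\<Sum>i=1..n. \<phi> i (h i (w t)) - \<phi> i (hstar i)))
    \<le> exp \<beta> * L\<phi> * (1 + \<epsilon>) / (2 * (1 - 4 * \<alpha>) * \<alpha> * \<beta>)
        * ((1 / real n) * (\<Sum>i=1..n. (norm (h i (w 0) - hstar i))\<^sup>2)) * \<epsilon>
      + exp \<beta> * L\<phi> * (4 * \<epsilon> + 3) / (2 * \<alpha> * (1 - 4 * \<alpha>))
        * (D\<^sup>2 * H\<^sup>2 + real CARD('c) * (2 + (V + \<epsilon>\<^sup>2 + 2) * G * D\<^sup>2)\<^sup>2 + 2 + V) * \<epsilon>"
proof -
  define c where "c = real CARD('c)"
  define X where "X = (V + \<epsilon>\<^sup>2 + 2) * G * D\<^sup>2"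
  define K where "K = D\<^sup>2 * H\<^sup>2 + c * X\<^sup>2 + 2 + V"
  define S where "S t = (\<Sum>i=1..n. (norm (h i (w t) - hstar i))\<^sup>2)" for t
  define \<Delta> where "\<Delta> t = (\<Sum>i=1..n. \<phi> i (h i (w t)) - \<phi> i (hstar i))" for t
  define k where "k = 2 * (1 - \<alpha>) * \<alpha> / (exp \<beta> * L\<phi>)"
  define M where "M = 3 * real n * K * \<epsilon>\<^sup>2"
  have c0: "c \<ge> 0" unfolding c_def by simp
  have X0: "X \<ge> 0" unfolding X_def using C_V B_Gpos by simp
  have K0: "K \<ge> 0" unfolding K_def using c0 C_V by simp
  have M0: "M \<ge> 0" unfolding M_def using K0 by simp
  have S0: "S t \<ge> 0" for t unfolding S_def by (simp add: sum_nonneg)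
  have k0: "k > 0" unfolding k_def using alpha_range A_Lpos by simp
  have Tpos: "real T > 0" using T_def eps_pos beta_pos by simp
  have epsT: "\<epsilon> * real T = \<beta>" using T_def eps_pos by simp
  have step: "S (Suc t) \<le> (1 + \<epsilon>) * (S t - 2 * ((1 + \<epsilon>) ^ t * \<alpha> / (exp \<beta> * L\<phi>)) * (1 - \<alpha>) * \<Delta> t)
      + (1 + 1 / \<epsilon>) * M" if tT: "t < T" for t
  proof -
    let ?\<eta> = "D * sqrt \<epsilon>"
    define aa where "aa = (1 + \<epsilon>) ^ t * \<alpha> / (exp \<beta> * L\<phi>)"
    let ?A = "\<lambda>i::nat. (1 + \<epsilon>) ^ t * \<alpha> / (exp \<beta> * L\<phi>)"
    let ?Jm = "\<lambda>i. Jh i (w t)"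
    let ?gm = "\<lambda>i. g\<phi> i (h i (w t))"
    define ereg where "ereg i = ?\<eta> *\<^sub>R (Jh i (w t) *v vreg t) - aa *\<^sub>R g\<phi> i (h i (w t))" for i
    have eta2: "?\<eta>\<^sup>2 = D\<^sup>2 * \<epsilon>" using eps_pos by (simp add: power_mult_distrib)
    have eta0: "?\<eta> \<ge> 0" using D_pos eps_pos by simp
    have aa0: "aa \<ge> 0" unfolding aa_def using alpha_range A_Lpos eps_pos by simp
    have aaL: "aa * L\<phi> \<le> \<alpha>"
    proof -
      have "(1 + \<epsilon>) ^ t \<le> exp \<epsilon> ^ t"
        using eps_pos exp_ge_add_one_self[of \<epsilon>] by (intro power_mono) auto
      also have "\<dots> = exp (real t * \<epsilon>)" by (simp add: exp_of_nat_mult)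
      also have "\<dots> \<le> exp \<beta>"
      proof -
        have "real t * \<epsilon> \<le> real T * \<epsilon>" using tT eps_pos by (intro mult_right_mono) auto
        then show ?thesis using epsT by (simp add: mult.commute)
      qed
      finally have "(1 + \<epsilon>) ^ t \<le> exp \<beta>" .
      then have "(1 + \<epsilon>) ^ t * \<alpha> \<le> exp \<beta> * \<alpha>" using alpha_range by (intro mult_right_mono) auto
      then show ?thesis unfolding aa_def using A_Lpos by (simp add: field_simps)
    qed
    obtain vh where vh: "(norm vh)\<^sup>2 \<le> V" "Phi_obj n ?\<eta> ?A ?Jm ?gm vh \<le> \<epsilon>\<^sup>2"
      using C_assm[OF tT] by blast
    have PhiN: "Phi_obj n ?\<eta> ?A ?Jm ?gm u \<ge> 0" for u
      unfolding Phi_obj_def by (simp add: sum_nonneg)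
    have Phi_ereg: "Phi_obj n ?\<eta> ?A ?Jm ?gm (vreg t) = 1 / (2 * real n) * (\<Sum>i=1..n. (norm (ereg i))\<^sup>2)"
      unfolding Phi_obj_def ereg_def aa_def by simp
    have psi: "Phi_obj n ?\<eta> ?A ?Jm ?gm (vreg t) + \<epsilon>\<^sup>2 / 2 * (norm (vreg t))\<^sup>2 \<le> \<epsilon>\<^sup>2 + \<epsilon>\<^sup>2 / 2 * V"
    proof -
      have "Phi_obj n ?\<eta> ?A ?Jm ?gm (vreg t) + \<epsilon>\<^sup>2 / 2 * (norm (vreg t))\<^sup>2
          \<le> Phi_obj n ?\<eta> ?A ?Jm ?gm vh + \<epsilon>\<^sup>2 / 2 * (norm vh)\<^sup>2"
        using vreg_min[OF tT, of vh] unfolding Psi_obj_def by simp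
      also have "\<dots> \<le> \<epsilon>\<^sup>2 + \<epsilon>\<^sup>2 / 2 * V"
        using vh eps_pos by (intro add_mono mult_left_mono) auto
      finally show ?thesis .
    qed
    have vreg_bd: "(norm (vreg t))\<^sup>2 \<le> 2 + V"
    proof -
      have "\<epsilon>\<^sup>2 / 2 * (norm (vreg t))\<^sup>2 \<le> \<epsilon>\<^sup>2 / 2 * (2 + V)"
        using psi PhiN[of "vreg t"] by (simp add: algebra_simps)
      then show ?thesis using eps_pos by (simp add: mult_le_cancel_left_pos)
    qed
    have ereg_sum: "(\<Sum>i=1..n. (norm (ereg i))\<^sup>2) \<le> real n * (2 + V) * \<epsilon>\<^sup>2"
    proof -
      have n0: "real n > 0" using n_pos by simp
      have "1 / (2 * real n) * (\<Sum>i=1..n. (norm (ereg i))\<^sup>2) \<le> \<epsilon>\<^sup>2 + \<epsilon>\<^sup>2 / 2 * V"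
        using psi Phi_ereg by (smt (verit) zero_le_power2 mult_nonneg_nonneg divide_nonneg_nonneg)
      then show ?thesis using n0 by (simp add: field_simps)
    qed
    have v_bd: "(norm (v t))\<^sup>2 \<le> 2 * (V + \<epsilon>\<^sup>2 + 2)"
    proof -
      have "norm (v t) \<le> norm (vreg t) + \<epsilon>"
        using v_approx[OF tT] norm_triangle_ineq[of "v t - vreg t" "vreg t"] by simp
      then have "(norm (v t))\<^sup>2 \<le> (norm (vreg t) + \<epsilon>)\<^sup>2" by (simp add: power_mono)
      also have "\<dots> \<le> 2 * (norm (vreg t))\<^sup>2 + 2 * \<epsilon>\<^sup>2"
        using three_sq_real[of "norm (vreg t)" "\<epsilon>" 0] 
        by (smt (verit) zero_le_power2 power2_diff power2_sum)
      finally show ?thesis using vreg_bd by simp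
    qed
    define s where "s = (- ?\<eta>) *\<^sub>R v t"
    have ws: "w (Suc t) = w t + s" using w_step[OF tT] by (simp add: s_def)
    have s_bd: "G / 2 * (norm s)\<^sup>2 \<le> X * \<epsilon>"
    proof -
      have "(norm s)\<^sup>2 = D\<^sup>2 * \<epsilon> * (norm (v t))\<^sup>2"
        unfolding s_def using eta2 by (simp add: power_mult_distrib)
      also have "\<dots> \<le> D\<^sup>2 * \<epsilon> * (2 * (V + \<epsilon>\<^sup>2 + 2))"
        using v_bd eps_pos by (intro mult_left_mono) auto
      finally have "G / 2 * (norm s)\<^sup>2 \<le> G / 2 * (D\<^sup>2 * \<epsilon> * (2 * (V + \<epsilon>\<^sup>2 + 2)))"
        using B_Gpos by (intro mult_left_mono) auto
      then show ?thesis unfolding X_def by (simp add: algebra_simps)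
    qed
    define r where "r i = h i (w t + s) - h i (w t) - Jh i (w t) *v s" for i
    have r_bd: "(norm (r i))\<^sup>2 \<le> c * X\<^sup>2 * \<epsilon>\<^sup>2" if i: "i \<in> {1..n}" for i
    proof -
      have "(norm (r i))\<^sup>2 \<le> c * (G / 2 * (norm s)\<^sup>2)\<^sup>2"
        unfolding r_def c_def by (rule taylor_vec[OF B_jac[OF i] B_hess[OF i] B_bound[OF i]])
      also have "\<dots> \<le> c * (X * \<epsilon>)\<^sup>2"
        using s_bd B_Gpos c0 by (intro mult_left_mono power_mono) auto
      finally show ?thesis by (simp add: power_mult_distrib)
    qed
    have d_bd: "(norm (?\<eta> *\<^sub>R (Jh i (w t) *v (v t - vreg t))))\<^sup>2 \<le> D\<^sup>2 * H\<^sup>2 * \<epsilon>\<^sup>2"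
      if i: "i \<in> {1..n}" for i
    proof -
      have "norm (Jh i (w t) *v (v t - vreg t)) \<le> onorm (\<lambda>u. Jh i (w t) *v u) * norm (v t - vreg t)"
        by (rule onorm) simp
      also have "\<dots> \<le> (H / sqrt \<epsilon>) * \<epsilon>"
        using D_assm[OF i tT] v_approx[OF tT] D_H eps_pos
        by (intro mult_mono) auto
      finally have 1: "norm (Jh i (w t) *v (v t - vreg t)) \<le> (H / sqrt \<epsilon>) * \<epsilon>" .
      have "norm (?\<eta> *\<^sub>R (Jh i (w t) *v (v t - vreg t))) = ?\<eta> * norm (Jh i (w t) *v (v t - vreg t))"
        using eta0 by simp
      also have "\<dots> \<le> ?\<eta> * ((H / sqrt \<epsilon>) * \<epsilon>)" using 1 eta0 by (intro mult_left_mono) auto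
      also have "\<dots> = D * H * \<epsilon>" using eps_pos by simp
      finally have "norm (?\<eta> *\<^sub>R (Jh i (w t) *v (v t - vreg t))) \<le> D * H * \<epsilon>" .
      then have "(norm (?\<eta> *\<^sub>R (Jh i (w t) *v (v t - vreg t))))\<^sup>2 \<le> (D * H * \<epsilon>)\<^sup>2"
        by (intro power_mono) auto
      then show ?thesis by (simp add: power_mult_distrib)
    qed
    define err where "err i = r i + (- ereg i) + (- (?\<eta> *\<^sub>R (Jh i (w t) *v (v t - vreg t))))" for i
    have mneg: "A *v (- x) = - (A *v x)" for A :: "real^'d^'c" and x
      by (metis matrix_vector_mult_diff_distrib diff_0 matrix_vector_mult_0_right)
    have decomp: "h i (w (Suc t)) - hstar i = (h i (w t) - hstar i) - aa *\<^sub>R g\<phi> i (h i (w t)) + err i" for i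
      unfolding err_def r_def ereg_def ws s_def
      by (simp add: mneg matrix_vector_mult_scaleR matrix_vector_mult_diff_distrib algebra_simps)
    have err_bd: "(norm (err i))\<^sup>2 \<le> 3 * (c * X\<^sup>2 * \<epsilon>\<^sup>2 + (norm (ereg i))\<^sup>2 + D\<^sup>2 * H\<^sup>2 * \<epsilon>\<^sup>2)"
      if i: "i \<in> {1..n}" for i
    proof -
      have "(norm (err i))\<^sup>2 \<le> 3 * ((norm (r i))\<^sup>2 + (norm (ereg i))\<^sup>2 + (norm (?\<eta> *\<^sub>R (Jh i (w t) *v (v t - vreg t))))\<^sup>2)"
        unfolding err_def using three_sq[of "r i" "- ereg i" "- (?\<eta> *\<^sub>R (Jh i (w t) *v (v t - vreg t)))"]
        by (simp only: norm_minus_cancel)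
      also have "\<dots> \<le> 3 * (c * X\<^sup>2 * \<epsilon>\<^sup>2 + (norm (ereg i))\<^sup>2 + D\<^sup>2 * H\<^sup>2 * \<epsilon>\<^sup>2)"
        using r_bd[OF i] d_bd[OF i] by simp
      finally show ?thesis .
    qed
    have per_i: "(norm (h i (w (Suc t)) - hstar i))\<^sup>2 \<le> (1 + \<epsilon>) * ((norm (h i (w t) - hstar i))\<^sup>2
        - 2 * aa * (1 - \<alpha>) * (\<phi> i (h i (w t)) - \<phi> i (hstar i))) + (1 + 1 / \<epsilon>) * (norm (err i))\<^sup>2"
      if i: "i \<in> {1..n}" for i
    proof -
      have tg: "\<phi> i (h i (w t)) + g\<phi> i (h i (w t)) \<bullet> (hstar i - h i (w t)) \<le> \<phi> i (hstar i)"
        by (rule tangent_ineq[OF A_convex[OF i] A_grad[OF i]])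
      have gx: "\<phi> i (h i (w t)) - \<phi> i (hstar i) \<le> g\<phi> i (h i (w t)) \<bullet> (h i (w t) - hstar i)"
        using tg by (simp add: inner_diff_right)
      have D0: "0 \<le> \<phi> i (h i (w t)) - \<phi> i (hstar i)" using hstar_min[OF i] by simp
      have gs: "(norm (g\<phi> i (h i (w t))))\<^sup>2 \<le> 2 * L\<phi> * (\<phi> i (h i (w t)) - \<phi> i (hstar i))"
        by (rule grad_sq_bound[OF A_grad[OF i] A_smooth[OF i] A_Lpos hstar_min[OF i]])
      show ?thesis unfolding decomp
        by (rule one_step[OF eps_pos aa0 gx D0 gs aaL])
    qed
    have "S (Suc t) \<le> (\<Sum>i=1..n. (1 + \<epsilon>) * ((norm (h i (w t) - hstar i))\<^sup>2
        - 2 * aa * (1 - \<alpha>) * (\<phi> i (h i (w t)) - \<phi> i (hstar i))) + (1 + 1 / \<epsilon>) * (norm (err i))\<^sup>2)"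
      unfolding S_def by (intro sum_mono per_i)
    also have "\<dots> = (1 + \<epsilon>) * (S t - 2 * aa * (1 - \<alpha>) * \<Delta> t) + (1 + 1 / \<epsilon>) * (\<Sum>i=1..n. (norm (err i))\<^sup>2)"
      unfolding S_def \<Delta>_def
      by (simp add: sum.distrib sum_distrib_left sum_subtractf right_diff_distrib)
    also have "(\<Sum>i=1..n. (norm (err i))\<^sup>2) \<le> M"
    proof -
      have "(\<Sum>i=1..n. (norm (err i))\<^sup>2) \<le> (\<Sum>i=1..n. 3 * (c * X\<^sup>2 * \<epsilon>\<^sup>2 + (norm (ereg i))\<^sup>2 + D\<^sup>2 * H\<^sup>2 * \<epsilon>\<^sup>2))"
        by (intro sum_mono err_bd)
      also have "\<dots> = 3 * (real n * (c * X\<^sup>2 * \<epsilon>\<^sup>2) + (\<Sum>i=1..n. (norm (ereg i))\<^sup>2) + real n * (D\<^sup>2 * H\<^sup>2 * \<epsilon>\<^sup>2))"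
        by (simp add: sum.distrib sum_distrib_left[symmetric])
      also have "\<dots> \<le> 3 * (real n * (c * X\<^sup>2 * \<epsilon>\<^sup>2) + real n * (2 + V) * \<epsilon>\<^sup>2 + real n * (D\<^sup>2 * H\<^sup>2 * \<epsilon>\<^sup>2))"
        using ereg_sum by simp
      also have "\<dots> = M" unfolding M_def K_def by (simp add: algebra_simps)
      finally show ?thesis .
    qed
    finally show ?thesis using eps_pos unfolding aa_def by (simp add: mult_left_mono)
  qed
  have Ystep: "S (Suc t) / (1 + \<epsilon>) ^ Suc t \<le> S t / (1 + \<epsilon>) ^ t - k * \<Delta> t + M / \<epsilon>"
    if tT: "t < T" for t
  proof -
    define q where "q = (1 + \<epsilon>) ^ t"
    have q1: "q \<ge> 1" unfolding q_def using eps_pos by simp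
    have "S (Suc t) / (1 + \<epsilon>) ^ Suc t \<le> ((1 + \<epsilon>) * (S t - 2 * (q * \<alpha> / (exp \<beta> * L\<phi>)) * (1 - \<alpha>) * \<Delta> t)
      + (1 + 1 / \<epsilon>) * M) / ((1 + \<epsilon>) * q)"
      unfolding q_def power_Suc using step[OF tT] eps_pos q1 unfolding q_def
      by (intro divide_right_mono) auto
    also have "\<dots> = S t / q - k * \<Delta> t + M / (\<epsilon> * q)"
    proof -
      have e1: "1 + \<epsilon> \<noteq> 0" "q \<noteq> 0" "\<epsilon> \<noteq> 0" "exp \<beta> * L\<phi> \<noteq> 0" using eps_pos q1 A_Lpos by auto
      have "((1 + \<epsilon>) * (S t - 2 * (q * \<alpha> / (exp \<beta> * L\<phi>)) * (1 - \<alpha>) * \<Delta> t)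
        + (1 + 1 / \<epsilon>) * M) / ((1 + \<epsilon>) * q)
        = (1 + \<epsilon>) * (S t - 2 * (q * \<alpha> / (exp \<beta> * L\<phi>)) * (1 - \<alpha>) * \<Delta> t) / ((1 + \<epsilon>) * q)
          + (1 + 1 / \<epsilon>) * M / ((1 + \<epsilon>) * q)" by (rule add_divide_distrib)
      also have "(1 + \<epsilon>) * (S t - 2 * (q * \<alpha> / (exp \<beta> * L\<phi>)) * (1 - \<alpha>) * \<Delta> t) / ((1 + \<epsilon>) * q)
          = (S t - 2 * (q * \<alpha> / (exp \<beta> * L\<phi>)) * (1 - \<alpha>) * \<Delta> t) / q"
        using e1 by simp
      also have "\<dots> = S t / q - k * \<Delta> t" unfolding k_def using e1 by (simp add: field_simps)
      also have "(1 + 1 / \<epsilon>) * M / ((1 + \<epsilon>) * q) = M / (\<epsilon> * q)"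
      proof -
        have "1 + 1 / \<epsilon> = (1 + \<epsilon>) / \<epsilon>" using e1 by (simp add: field_simps)
        then show ?thesis using e1 by simp
      qed
      finally show ?thesis .
    qed
    also have "M / (\<epsilon> * q) \<le> M / \<epsilon>"
      using M0 q1 eps_pos by (simp add: divide_le_cancel field_simps mult_le_cancel_left1
          order_trans[OF _ mult_right_mono[of 1 q]])
    finally show ?thesis unfolding q_def by simp
  qed
  have tele: "S m / (1 + \<epsilon>) ^ m + k * (\<Sum>t<m. \<Delta> t) \<le> S 0 + real m * (M / \<epsilon>)" if "m \<le> T" for m
    using that
  proof (induction m)
    case 0 then show ?case by simp
  next
    case (Suc m)
    then have "m < T" by simp
    from Ystep[OF this] Suc.IH \<open>m < T\<close> show ?case by (simp add: algebra_simps)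
  qed
  have sumD: "k * (\<Sum>t<T. \<Delta> t) \<le> S 0 + real T * (M / \<epsilon>)"
  proof -
    have "S T / (1 + \<epsilon>) ^ T \<ge> 0" using S0[of T] eps_pos by simp
    then show ?thesis using tele[of T] by simp
  qed
  have n0: "real n > 0" using n_pos by simp
  have LHS: "(1 / real T) * (\<Sum>t<T. (1 / real n) * \<Delta> t) = (\<Sum>t<T. \<Delta> t) / (real T * real n)"
    by (simp add: sum_distrib_left[symmetric] sum_divide_distrib[symmetric] field_simps)
  also have "\<dots> \<le> (S 0 + real T * (M / \<epsilon>)) / k / (real T * real n)"
    using sumD k0 Tpos n0 by (intro divide_right_mono) (auto simp: field_simps)
  also have "\<dots> = (1 / k) * (S 0 / real n) * (\<epsilon> / \<beta>) + 3 * K * \<epsilon> / k"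
    using k0 Tpos n0 eps_pos beta_pos epsT unfolding M_def
    by (simp add: field_simps power2_eq_square)
  also have "\<dots> \<le> exp \<beta> * L\<phi> * (1 + \<epsilon>) / (2 * (1 - 4 * \<alpha>) * \<alpha> * \<beta>) * (S 0 / real n) * \<epsilon>
      + exp \<beta> * L\<phi> * (4 * \<epsilon> + 3) / (2 * \<alpha> * (1 - 4 * \<alpha>))
        * (D\<^sup>2 * H\<^sup>2 + c * (2 + X)\<^sup>2 + 2 + V) * \<epsilon>"
  proof -
    define E where "E = exp \<beta> * L\<phi>"
    have E0: "E > 0" unfolding E_def using A_Lpos by simp
    have a1: "1 - \<alpha> > 0" "1 - 4 * \<alpha> > 0" using alpha_range by auto
    have r1: "1 / (1 - \<alpha>) \<le> (1 + \<epsilon>) / (1 - 4 * \<alpha>)"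
    proof -
      have "1 / (1 - \<alpha>) \<le> 1 / (1 - 4 * \<alpha>)" using a1 alpha_range by (intro divide_left_mono) auto
      also have "\<dots> \<le> (1 + \<epsilon>) / (1 - 4 * \<alpha>)" using a1 eps_pos by (intro divide_right_mono) auto
      finally show ?thesis .
    qed
    have r2: "3 / (1 - \<alpha>) \<le> (4 * \<epsilon> + 3) / (1 - 4 * \<alpha>)"
    proof -
      have "3 / (1 - \<alpha>) \<le> 3 / (1 - 4 * \<alpha>)" using a1 alpha_range by (intro divide_left_mono) auto
      also have "\<dots> \<le> (4 * \<epsilon> + 3) / (1 - 4 * \<alpha>)" using a1 eps_pos by (intro divide_right_mono) auto
      finally show ?thesis .
    qed
    have KK: "K \<le> D\<^sup>2 * H\<^sup>2 + c * (2 + X)\<^sup>2 + 2 + V"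
    proof -
      have "X\<^sup>2 \<le> (2 + X)\<^sup>2" using X0 by (intro power_mono) auto
      then have "c * X\<^sup>2 \<le> c * (2 + X)\<^sup>2" using c0 by (rule mult_left_mono)
      then show ?thesis unfolding K_def by simp
    qed
    have SS: "S 0 / real n \<ge> 0" using S0 n0 by simp
    have p1: "(1 / k) * (S 0 / real n) * (\<epsilon> / \<beta>) = (E / (2 * \<alpha> * \<beta>) * (S 0 / real n) * \<epsilon>) * (1 / (1 - \<alpha>))"
      unfolding k_def E_def using a1 alpha_range beta_pos E0 A_Lpos by (simp add: field_simps)
    have p1': "exp \<beta> * L\<phi> * (1 + \<epsilon>) / (2 * (1 - 4 * \<alpha>) * \<alpha> * \<beta>) * (S 0 / real n) * \<epsilon>
        = (E / (2 * \<alpha> * \<beta>) * (S 0 / real n) * \<epsilon>) * ((1 + \<epsilon>) / (1 - 4 * \<alpha>))"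
      unfolding E_def using a1 alpha_range beta_pos by (simp add: field_simps)
    have q1: "(1 / k) * (S 0 / real n) * (\<epsilon> / \<beta>) \<le> exp \<beta> * L\<phi> * (1 + \<epsilon>) / (2 * (1 - 4 * \<alpha>) * \<alpha> * \<beta>) * (S 0 / real n) * \<epsilon>"
    proof -
      have "E / (2 * \<alpha> * \<beta>) * (S 0 / real n) * \<epsilon> \<ge> 0"
        using E0 SS alpha_range beta_pos eps_pos by (intro mult_nonneg_nonneg) auto
      then show ?thesis unfolding p1 p1' using r1 by (rule mult_left_mono[rotated])
    qed
    have p2: "3 * K * \<epsilon> / k = (E / (2 * \<alpha>) * K * \<epsilon>) * (3 / (1 - \<alpha>))"
      unfolding k_def E_def using a1 alpha_range E0 A_Lpos by (simp add: field_simps)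
    have "3 * K * \<epsilon> / k \<le> (E / (2 * \<alpha>) * K * \<epsilon>) * ((4 * \<epsilon> + 3) / (1 - 4 * \<alpha>))"
      unfolding p2 using r2 E0 K0 alpha_range eps_pos by (intro mult_left_mono) auto
    also have "\<dots> \<le> (E / (2 * \<alpha>) * (D\<^sup>2 * H\<^sup>2 + c * (2 + X)\<^sup>2 + 2 + V) * \<epsilon>) * ((4 * \<epsilon> + 3) / (1 - 4 * \<alpha>))"
      using KK E0 alpha_range eps_pos a1 by (intro mult_right_mono mult_left_mono) auto
    also have "\<dots> = exp \<beta> * L\<phi> * (4 * \<epsilon> + 3) / (2 * \<alpha> * (1 - 4 * \<alpha>))
        * (D\<^sup>2 * H\<^sup>2 + c * (2 + X)\<^sup>2 + 2 + V) * \<epsilon>"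
      unfolding E_def using a1 alpha_range by (simp add: field_simps)
    finally have q2: "3 * K * \<epsilon> / k \<le> exp \<beta> * L\<phi> * (4 * \<epsilon> + 3) / (2 * \<alpha> * (1 - 4 * \<alpha>))
        * (D\<^sup>2 * H\<^sup>2 + c * (2 + X)\<^sup>2 + 2 + V) * \<epsilon>" .
    show ?thesis using q1 q2 by linarith
  qed
  finally show ?thesis unfolding S_def \<Delta>_def c_def X_def by simp
qed

end
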